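(* $$b_{\sup}\le \frac12-\frac{2}{(2+(1+2\sqrt2)\pi)^2}=0.489\ldots.$$
   Context: $[n]=\{1,\dots,n\}$; for $A\subset\mathbb Z$, $A+A=\{a+b:a,b\in A\}$. Define $$b_{\sup}=\limsup_{\epsilon\to0,\ k\to\infty}\frac{\max\{n : \exists A\subset\mathbb Z,\ |A|=k,\ |(A+A)\cap[n]|\ge(1-\epsilon)n\}}{k^2}.$$ *)

theory Defs
  imports "HOL-Analysis.Analysis"
begin

definition sumset :: "int set \<Rightarrow> int set" where
  "sumset A = {a + b | a b. a \<in> A \<and> b \<in> A}"

definition maxN :: "nat \<Rightarrow> real \<Rightarrow> nat" where
  "maxN k eps = Max {n::nat. \<exists>A::int set. finite A \<and> card A = k \<and>
      real (card (sumset A \<inter> {1..int n})) \<ge> (1 - eps) * real n}"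

definition b_sup :: ereal where
  "b_sup = Limsup (at_right (0::real) \<times>\<^sub>F sequentially)
              (\<lambda>(eps, k). ereal (real (maxN k eps) / (real k) ^ 2))"

end

theory Submission
  imports Defs
begin

lemma cis_minus_one_le: "cmod (cis t - 1) \<le> \<bar>t\<bar>"
proof -
  have "(cmod (cis t - 1))^2 = (cos t - 1)^2 + (sin t)^2"
    by (simp add: cmod_def cis.ctr)
  also have "\<dots> = 2 - 2 * cos t" using sin_cos_squared_add[of t] by (simp add: power2_eq_square algebra_simps)
  also have "\<dots> = 4 * (sin (t/2))^2" using cos_double_sin[of "t/2"] by simp
  also have "\<dots> \<le> t^2"
  proof -
    have "\<bar>sin (t/2)\<bar> \<le> \<bar>t/2\<bar>" by (rule abs_sin_x_le_abs_x)
    then have "(sin (t/2))^2 \<le> (t/2)^2" by (metis abs_le_square_iff)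
    then show ?thesis by (simp add: power_divide)
  qed
  finally have "(cmod (cis t - 1))^2 \<le> \<bar>t\<bar>^2" by simp
  then show ?thesis by (simp add: abs_le_square_iff[symmetric])
qed

lemma Dsum: "(\<Sum>x\<in>{1..int n}. cis (of_int x * t)) = (\<Sum>j<n. cis t ^ Suc j)"
proof (induction n)
  case 0 then show ?case by simp
next
  case (Suc n)
  have "{1..int (Suc n)} = insert (int n + 1) {1..int n}" by auto
  then have "(\<Sum>x\<in>{1..int (Suc n)}. cis (of_int x * t)) = cis (of_int (int n + 1) * t) + (\<Sum>x\<in>{1..int n}. cis (of_int x * t))"
    by simp
  also have "cis (of_int (int n + 1) * t) = cis t ^ Suc n" unfolding Complex.DeMoivre by (simp add: algebra_simps)
  finally show ?case using Suc by simp
qed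

lemma Dgeom: fixes z :: complex assumes "z \<noteq> 1" shows "(\<Sum>j<n. z ^ Suc j) = z * (z^n - 1) / (z - 1)"
proof -
  have "(\<Sum>j<n. z ^ Suc j) = (\<Sum>j<n. z * z ^ j)" by simp
  also have "\<dots> = z * (\<Sum>j<n. z ^ j)" by (rule sum_distrib_left[symmetric])
  finally have "(\<Sum>j<n. z ^ Suc j) = z * (\<Sum>j<n. z ^ j)" .
  then show ?thesis using geometric_sum[OF assms, of n] by simp
qed

lemma D_zero: assumes "n \<ge> 2" shows "(\<Sum>x\<in>{1..int n}. cis (of_int x * (2*pi/n))) = 0"
proof -
  let ?z = "cis (2*pi/n)"
  have zn: "?z ^ n = 1" using assms unfolding Complex.DeMoivre by simp
  have "cos (2*pi/n) \<noteq> 1"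
  proof
    assume "cos (2*pi/n) = 1"
    then obtain m::int where m: "2*pi/n = m * 2 * pi" by (auto simp: cos_one_2pi_int)
    then have "(2*pi) * (1 / real n) = (2*pi) * m" by simp
    then have "1 / real n = m" using pi_gt_zero by (metis mult_cancel_left mult_eq_0_iff pi_neq_zero zero_neq_numeral)
    moreover have "0 < 1 / real n" "1 / real n < 1" using assms by auto
    ultimately show False by (metis of_int_0_less_iff of_int_less_1_iff not_le zero_less_imp_eq_int int_one_le_iff_zero_less)
  qed
  then have "?z \<noteq> 1" by (metis cis.sel(1) one_complex.sel(1))
  then show ?thesis using Dsum[where n=n and t="2*pi/n"] Dgeom[of ?z n] zn by simp
qed

lemma D_big: assumes "n \<ge> 1" shows "cmod (\<Sum>x\<in>{1..int n}. cis (of_int x * (pi/n))) \<ge> 2 * n / pi"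
proof -
  let ?z = "cis (pi/n)"
  have zn: "?z ^ n = -1" using assms unfolding Complex.DeMoivre by simp
  have z1: "?z \<noteq> 1" proof assume "?z = 1" then have "?z^n = 1" by simp with zn show False by simp qed
  have "(\<Sum>x\<in>{1..int n}. cis (of_int x * (pi/n))) = ?z * (-2) / (?z - 1)"
    using Dsum[where n=n and t="pi/n"] Dgeom[OF z1, of n] zn by simp
  then have "cmod (\<Sum>x\<in>{1..int n}. cis (of_int x * (pi/n))) = 2 / cmod (?z - 1)"
    by (simp add: norm_divide norm_mult)
  moreover have "cmod (?z - 1) \<le> pi / n" using cis_minus_one_le[of "pi/n"] by simp
  moreover have "cmod (?z - 1) > 0" using z1 by simp
  ultimately have "cmod (\<Sum>x\<in>{1..int n}. cis (of_int x * (pi/n))) \<ge> 2 / (pi / n)"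
    using divide_left_mono[of "cmod (?z - 1)" "pi/n" 2] assms by simp
  then show ?thesis by simp
qed

definition Pp :: "int set \<Rightarrow> (int \<times> int) set" where
  "Pp A = {p \<in> A \<times> A. fst p \<le> snd p}"

lemma sym_split:
  fixes h :: "int \<times> int \<Rightarrow> 'b::comm_ring_1"
  assumes fin: "finite A" and sym: "\<And>a b. h (a,b) = h (b,a)"
  shows "(\<Sum>p\<in>A\<times>A. h p) + (\<Sum>a\<in>A. h (a,a)) = 2 * (\<Sum>p\<in>Pp A. h p)"
proof -
  define Lt where "Lt = {p \<in> A \<times> A. fst p < snd p}"
  define Eq where "Eq = {p \<in> A \<times> A. fst p = snd p}"
  define Gt where "Gt = {p \<in> A \<times> A. fst p > snd p}"
  have finAA: "finite (A \<times> A)" using fin by simp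
  have f1: "finite Lt" "finite Eq" "finite Gt" "finite (Pp A)"
    unfolding Lt_def Eq_def Gt_def Pp_def using finAA by simp_all
  have AA: "A \<times> A = Pp A \<union> Gt" unfolding Pp_def Gt_def by auto
  have PP: "Pp A = Lt \<union> Eq" unfolding Pp_def Lt_def Eq_def by auto
  have s1: "(\<Sum>p\<in>A\<times>A. h p) = (\<Sum>p\<in>Pp A. h p) + (\<Sum>p\<in>Gt. h p)"
    unfolding AA by (rule sum.union_disjoint) (use f1 in \<open>auto simp: Pp_def Gt_def\<close>)
  have s2: "(\<Sum>p\<in>Pp A. h p) = (\<Sum>p\<in>Lt. h p) + (\<Sum>p\<in>Eq. h p)"
    unfolding PP by (rule sum.union_disjoint) (use f1 in \<open>auto simp: Lt_def Eq_def\<close>)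
  have bijS: "bij_betw prod.swap Lt Gt"
  proof (rule bij_betwI[where g=prod.swap])
    show "prod.swap \<in> Lt \<rightarrow> Gt" unfolding Lt_def Gt_def by force
    show "prod.swap \<in> Gt \<rightarrow> Lt" unfolding Lt_def Gt_def by force
  qed simp_all
  have s3: "(\<Sum>p\<in>Gt. h p) = (\<Sum>p\<in>Lt. h p)"
  proof -
    have "(\<Sum>p\<in>Lt. h (prod.swap p)) = (\<Sum>p\<in>Gt. h p)" using sum.reindex_bij_betw[OF bijS, of h] by simp
    moreover have "h (prod.swap p) = h p" for p using sym[of "fst p" "snd p"] by (cases p) simp
    ultimately show ?thesis by simp
  qed
  have bij2: "bij_betw (\<lambda>a. (a,a)) A Eq" unfolding Eq_def
    by (rule bij_betwI[where g=fst]) auto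
  have s4: "(\<Sum>p\<in>Eq. h p) = (\<Sum>a\<in>A. h (a,a))"
    using sum.reindex_bij_betw[OF bij2, of h] by simp
  have gen: "x = p + g \<Longrightarrow> g = l \<Longrightarrow> p = l + e \<Longrightarrow> e = a \<Longrightarrow> x + a = 2*p" for x p g l e a :: 'b
    by (metis add.assoc mult_2)
  show ?thesis by (rule gen[OF s1 s3 s2 s4])
qed

lemma card_Pp: assumes "finite A" shows "2 * card (Pp A) = card A ^ 2 + card A"
proof -
  have "(\<Sum>p\<in>A\<times>A. (1::int)) + (\<Sum>a\<in>A. 1) = 2 * (\<Sum>p\<in>Pp A. 1)"
    by (rule sym_split[OF assms]) simp
  then have "int (card A * card A) + int (card A) = 2 * int (card (Pp A))"
    by (simp add: card_cartesian_product)
  then have "int (2 * card (Pp A)) = int (card A ^ 2 + card A)" by (simp add: power2_eq_square)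
  then show ?thesis by (simp only: of_nat_eq_iff)
qed


definition fS :: "int set \<Rightarrow> real \<Rightarrow> complex" where
  "fS A t = (\<Sum>a\<in>A. cis (of_int a * t))"

definition Dn :: "nat \<Rightarrow> real \<Rightarrow> complex" where
  "Dn n t = (\<Sum>x\<in>{1..int n}. cis (of_int x * t))"

lemma fS_sq: assumes "finite A"
  shows "fS A t ^ 2 = (\<Sum>p\<in>A\<times>A. cis (of_int (fst p + snd p) * t))"
proof -
  have "fS A t ^ 2 = (\<Sum>a\<in>A. \<Sum>b\<in>A. cis (of_int a * t) * cis (of_int b * t))"
    unfolding fS_def power2_eq_square by (rule sum_product)
  also have "\<dots> = (\<Sum>a\<in>A. \<Sum>b\<in>A. cis (of_int (a + b) * t))"
    by (simp add: cis_mult distrib_right)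
  also have "\<dots> = (\<Sum>p\<in>A\<times>A. cis (of_int (fst p + snd p) * t))"
    unfolding sum.cartesian_product by (simp add: case_prod_unfold)
  finally show ?thesis .
qed

lemma fS_P: assumes "finite A"
  shows "fS A t ^ 2 + fS A (2*t) = 2 * (\<Sum>p\<in>Pp A. cis (of_int (fst p + snd p) * t))"
proof -
  have "fS A (2*t) = (\<Sum>a\<in>A. cis (of_int (fst (a,a) + snd (a,a)) * t))"
    unfolding fS_def by (simp add: algebra_simps)
  then show ?thesis using fS_sq[OF assms, of t]
    sym_split[OF assms, of "\<lambda>p. cis (of_int (fst p + snd p) * t)"] by (simp add: add.commute)
qed

lemma norm_sum_cis_le: "cmod (\<Sum>x\<in>B. cis (g x)) \<le> real (card B)"
proof -
  have "cmod (\<Sum>x\<in>B. cis (g x)) \<le> (\<Sum>x\<in>B. cmod (cis (g x)))" by (rule norm_sum)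
  also have "\<dots> = real (card B)" by simp
  finally show ?thesis .
qed

lemma rep_bound:
  assumes fin: "finite A" and S: "S = sumset A \<inter> {1..int n}"
  shows "cmod ((\<Sum>p\<in>Pp A. cis (of_int (fst p + snd p) * t)) - (\<Sum>x\<in>S. cis (of_int x * t)))
         \<le> real (card (Pp A)) - real (card S)"
proof -
  define rep where "rep x = (SOME p. p \<in> Pp A \<and> fst p + snd p = x)" for x
  have ex: "\<exists>p. p \<in> Pp A \<and> fst p + snd p = x" if "x \<in> S" for x
  proof -
    from that S obtain a b where ab: "a \<in> A" "b \<in> A" "x = a + b" unfolding sumset_def by blast
    show ?thesis
    proof (cases "a \<le> b")
      case True then show ?thesis using ab by (intro exI[of _ "(a,b)"]) (auto simp: Pp_def)
    next
      case False then show ?thesis using ab by (intro exI[of _ "(b,a)"]) (auto simp: Pp_def)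
    qed
  qed
  have rep: "rep x \<in> Pp A \<and> fst (rep x) + snd (rep x) = x" if "x \<in> S" for x
    unfolding rep_def by (rule someI_ex[OF ex[OF that]])
  have inj: "inj_on rep S" by (rule inj_onI) (metis rep)
  have RP: "rep ` S \<subseteq> Pp A" using rep by auto
  have finP: "finite (Pp A)" using fin unfolding Pp_def by simp
  let ?g = "\<lambda>p. cis (of_int (fst p + snd p) * t)"
  have "(\<Sum>p\<in>Pp A. ?g p) = (\<Sum>p\<in>Pp A - rep ` S. ?g p) + (\<Sum>p\<in>rep ` S. ?g p)"
    by (rule sum.subset_diff[OF RP finP])
  moreover have "(\<Sum>p\<in>rep ` S. ?g p) = (\<Sum>x\<in>S. ?g (rep x))" using sum.reindex[OF inj, of ?g] by (simp add: comp_def)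
  moreover have "(\<Sum>x\<in>S. ?g (rep x)) = (\<Sum>x\<in>S. cis (of_int x * t))"
    by (rule sum.cong) (simp_all add: rep)
  ultimately have "(\<Sum>p\<in>Pp A. ?g p) - (\<Sum>x\<in>S. cis (of_int x * t)) = (\<Sum>p\<in>Pp A - rep ` S. ?g p)"
    by simp
  then have "cmod ((\<Sum>p\<in>Pp A. ?g p) - (\<Sum>x\<in>S. cis (of_int x * t))) \<le> real (card (Pp A - rep ` S))"
    using norm_sum_cis_le by metis
  also have "card (Pp A - rep ` S) = card (Pp A) - card S"
    using card_Diff_subset[OF finite_subset[OF RP finP] RP] card_image[OF inj] by simp
  also have "real (card (Pp A) - card S) = real (card (Pp A)) - real (card S)"
    using card_mono[OF finP RP] card_image[OF inj] by simp
  finally show ?thesis .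
qed

lemma Dn_bound:
  assumes S: "S \<subseteq> {1..int n}"
  shows "cmod (Dn n t - (\<Sum>x\<in>S. cis (of_int x * t))) \<le> real n - real (card S)"
proof -
  have fin: "finite {1..int n}" by simp
  have "Dn n t = (\<Sum>x\<in>{1..int n} - S. cis (of_int x * t)) + (\<Sum>x\<in>S. cis (of_int x * t))"
    unfolding Dn_def by (rule sum.subset_diff[OF S fin])
  then have "cmod (Dn n t - (\<Sum>x\<in>S. cis (of_int x * t))) \<le> real (card ({1..int n} - S))"
    using norm_sum_cis_le by (metis add_diff_cancel_right')
  also have "card ({1..int n} - S) = n - card S"
    using card_Diff_subset[OF finite_subset[OF S fin] S] by simp
  also have "real (n - card S) = real n - real (card S)"
    using card_mono[OF fin S] by simp
  finally show ?thesis .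
qed

lemma key_bound:
  assumes fin: "finite A" and S: "S = sumset A \<inter> {1..int n}"
  shows "cmod (fS A t ^ 2 - 2 * Dn n t) \<le> 2 * real n + real (card A)^2 + 2 * real (card A) - 4 * real (card S)"
proof -
  let ?P = "(\<Sum>p\<in>Pp A. cis (of_int (fst p + snd p) * t))"
  let ?S = "(\<Sum>x\<in>S. cis (of_int x * t))"
  have gen: "x + y = 2*p \<Longrightarrow> x - 2*d = 2*(p - s) - 2*(d - s) - y" for x y p d s :: complex
    by (simp add: algebra_simps)
  have e: "fS A t ^ 2 - 2 * Dn n t = 2 * (?P - ?S) - 2 * (Dn n t - ?S) - fS A (2*t)"
    by (rule gen[OF fS_P[OF fin, of t]])
  have b1: "cmod (?P - ?S) \<le> real (card (Pp A)) - real (card S)" by (rule rep_bound[OF fin S])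
  have b2: "cmod (Dn n t - ?S) \<le> real n - real (card S)" by (rule Dn_bound) (use S in auto)
  have b3: "cmod (fS A (2*t)) \<le> real (card A)" unfolding fS_def by (rule norm_sum_cis_le)
  have cP: "2 * real (card (Pp A)) = real (card A)^2 + real (card A)"
  proof -
    have "real (2 * card (Pp A)) = real (card A ^ 2 + card A)" by (simp only: card_Pp[OF fin])
    then show ?thesis by simp
  qed
  have "cmod (fS A t ^ 2 - 2 * Dn n t) \<le> cmod (2 * (?P - ?S)) + cmod (2 * (Dn n t - ?S)) + cmod (fS A (2*t))"
  proof -
    have "cmod (2 * (?P - ?S) - 2 * (Dn n t - ?S) - fS A (2*t)) \<le> cmod (2 * (?P - ?S) - 2 * (Dn n t - ?S)) + cmod (fS A (2*t))"
      by (rule norm_triangle_ineq4)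
    moreover have "cmod (2 * (?P - ?S) - 2 * (Dn n t - ?S)) \<le> cmod (2 * (?P - ?S)) + cmod (2 * (Dn n t - ?S))"
      by (rule norm_triangle_ineq4)
    ultimately show ?thesis unfolding e by linarith
  qed
  also have "\<dots> = 2 * cmod (?P - ?S) + 2 * cmod (Dn n t - ?S) + cmod (fS A (2*t))"
    by (simp only: norm_mult norm_numeral)
  finally show ?thesis using b1 b2 b3 cP by linarith
qed

lemma re_sq_unit: assumes "cmod u = 1" shows "Re (u^2) = 2 * (Re u)^2 - 1"
proof -
  have "(cmod u)^2 = (Re u)^2 + (Im u)^2" by (rule cmod_power2)
  then have "(Re u)^2 + (Im u)^2 = 1" using assms by simp
  moreover have "Re (u^2) = (Re u)^2 - (Im u)^2" by (simp add: power2_eq_square)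
  ultimately show ?thesis by simp
qed

lemma double_bound:
  assumes fin: "finite A" and k: "card A = k" "k > 0"
  shows "2 * (cmod (fS A t))^2 / real k - real k \<le> cmod (fS A (2*t))"
proof (cases "fS A t = 0")
  case True
  have "0 \<le> cmod (fS A (2*t))" by (rule norm_ge_zero)
  moreover have "2 * (cmod (fS A t))^2 / real k - real k \<le> 0" using True by simp
  ultimately show ?thesis by linarith
next
  case False
  define F where "F = fS A t"
  have Fn: "cmod F > 0" using False F_def by simp
  define w where "w = cnj F / of_real (cmod F)"
  have wn: "cmod w = 1" unfolding w_def using Fn by (simp add: norm_divide)
  define z where "z a = w * cis (of_int a * t)" for a :: int
  have zn: "cmod (z a) = 1" for a unfolding z_def by (simp add: norm_mult wn)
  have "(\<Sum>a\<in>A. z a) = w * F" unfolding z_def F_def fS_def by (simp add: sum_distrib_left)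
  also have "w * F = of_real ((cmod F)^2) / of_real (cmod F)" unfolding w_def complex_norm_square
    by (simp add: mult.commute)
  also have "\<dots> = of_real (cmod F)" using Fn by (simp add: power2_eq_square)
  finally have sz: "(\<Sum>a\<in>A. z a) = of_real (cmod F)" .
  have sRe: "(\<Sum>a\<in>A. Re (z a)) = cmod F"
    using arg_cong[OF sz, of Re] by (simp add: Re_sum)
  have z2: "z a ^ 2 = w^2 * cis (of_int a * (2*t))" for a
  proof -
    have "cis (of_int a * t) ^ 2 = cis (real 2 * (of_int a * t))" by (rule Complex.DeMoivre)
    then show ?thesis unfolding z_def by (simp add: power_mult_distrib algebra_simps)
  qed
  have sz2: "(\<Sum>a\<in>A. z a ^ 2) = w^2 * fS A (2*t)" unfolding fS_def z2 by (simp add: sum_distrib_left)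
  have "Re (w^2 * fS A (2*t)) = (\<Sum>a\<in>A. Re (z a ^ 2))" unfolding sz2[symmetric] by (simp add: Re_sum)
  also have "\<dots> = (\<Sum>a\<in>A. 2 * (Re (z a))^2 - 1)" using re_sq_unit[OF zn] by simp
  also have "\<dots> = 2 * (\<Sum>a\<in>A. (Re (z a))^2) - real k"
    using k by (simp add: sum_subtractf sum_distrib_left)
  finally have e1: "Re (w^2 * fS A (2*t)) = 2 * (\<Sum>a\<in>A. (Re (z a))^2) - real k" .
  have "Re (w^2 * fS A (2*t)) \<le> cmod (w^2 * fS A (2*t))" by (rule complex_Re_le_cmod)
  also have "\<dots> = cmod (fS A (2*t))" by (simp add: norm_mult norm_power wn)
  finally have e2: "2 * (\<Sum>a\<in>A. (Re (z a))^2) - real k \<le> cmod (fS A (2*t))" using e1 by simp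
  have cs: "(cmod F)^2 \<le> (\<Sum>a\<in>A. (Re (z a))^2) * real k"
    using sum_squared_le_sum_of_squares[of "\<lambda>a. Re (z a)" A] sRe k by simp
  have kpos: "real k > 0" using k by simp
  have "(cmod F)^2 / real k \<le> (\<Sum>a\<in>A. (Re (z a))^2)" using cs kpos by (simp add: divide_le_eq)
  moreover have "2 * (cmod F)^2 / real k = 2 * ((cmod F)^2 / real k)" by simp
  ultimately show ?thesis using e2 unfolding F_def by linarith
qed

lemma main_bound:
  assumes fin: "finite A" and k: "card A = k" and k1000: "k \<ge> 1000"
    and e0: "0 \<le> eps" and e1: "eps \<le> 1/4000"
    and cov: "real (card (sumset A \<inter> {1..int n})) \<ge> (1 - eps) * real n"
  shows "real n < (4895/10000) * (real k)^2"
proof (rule ccontr)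
  assume "\<not> ?thesis"
  then have nbig: "real n \<ge> (4895/10000) * (real k)^2" by simp
  define S where "S = sumset A \<inter> {1..int n}"
  define K where "K = real k"
  define N where "N = real n"
  define KK where "KK = K^2"
  define Q where "Q = 2 * N + KK + 2 * K - 4 * real (card S)"
  have K1000: "K \<ge> 1000" using k1000 K_def by simp
  have KKK: "KK \<ge> 1000 * K" unfolding KK_def power2_eq_square using K1000 by (intro mult_right_mono) auto
  have NKK: "N \<ge> (4895/10000) * KK" using nbig N_def K_def KK_def by simp
  have n2: "n \<ge> 2"
  proof -
    have "KK \<ge> 1000000" using KKK K1000 by linarith
    then have "N \<ge> 2" using NKK by linarith
    then show ?thesis unfolding N_def by simp
  qed
  have n1: "n \<ge> 1" using n2 by simp
  have cS: "real (card S) \<ge> (1 - eps) * N" using cov S_def N_def by simp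
  have epsN: "eps * N \<le> N / 4000" using e1 mult_right_mono[OF e1, of N] N_def by simp
  have Qb: "Q \<le> KK + 2*K - 2*N + 4 * (eps * N)" using cS unfolding Q_def by (simp add: algebra_simps)
  have Qb2: "Q \<le> (235/10000) * KK" using Qb epsN KKK NKK K1000 by linarith
  let ?t = "pi / real n"
  have eqQ: "2 * real n + real (card A)^2 + 2 * real (card A) - 4 * real (card S) = Q"
    unfolding Q_def N_def KK_def K_def k ..
  have kb1: "cmod (fS A ?t ^ 2 - 2 * Dn n ?t) \<le> Q"
    using key_bound[OF fin S_def, of ?t] unfolding eqQ .
  have kb2: "cmod (fS A (2 * ?t) ^ 2 - 2 * Dn n (2 * ?t)) \<le> Q"
    using key_bound[OF fin S_def, of "2 * ?t"] unfolding eqQ .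
  have tt: "2 * ?t = 2 * pi / real n" by simp
  have D2: "Dn n (2 * ?t) = 0" unfolding tt Dn_def by (rule D_zero[OF n2])
  have D1: "cmod (Dn n ?t) \<ge> 2 * N / pi" unfolding Dn_def N_def by (rule D_big[OF n1])
  define b where "b = cmod (fS A (2 * ?t))"
  define a where "a = (cmod (fS A ?t))^2"
  have b0: "b \<ge> 0" unfolding b_def by (rule norm_ge_zero)
  have bQ: "b^2 \<le> Q" using kb2 unfolding D2 b_def by (simp only: norm_power mult_zero_right diff_zero)
  have aQ: "a \<ge> 2 * (2 * N / pi) - Q"
  proof -
    have "cmod (2 * Dn n ?t) \<le> cmod (fS A ?t ^ 2) + cmod (2 * Dn n ?t - fS A ?t ^ 2)"
      by (rule norm_triangle_sub)
    also have "cmod (2 * Dn n ?t - fS A ?t ^ 2) = cmod (fS A ?t ^ 2 - 2 * Dn n ?t)"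
      by (rule norm_minus_commute)
    finally have "2 * cmod (Dn n ?t) \<le> a + cmod (fS A ?t ^ 2 - 2 * Dn n ?t)" unfolding a_def
      by (simp only: norm_mult norm_numeral norm_power)
    then show ?thesis using D1 kb1 by linarith
  qed
  have kpos: "k > 0" using k1000 by simp
  have db: "2 * a / K - K \<le> b"
    using double_bound[OF fin k kpos, of ?t] unfolding a_def b_def K_def .
  have pi32: "pi \<le> (32/10)" using pi_approx by simp
  have Npi0: "N / pi \<ge> N / (32/10)"
    using divide_left_mono[OF pi32, of N] pi_gt_zero N_def by simp
  have Npi: "N / pi \<ge> (10/32) * N" using Npi0 by simp
  have Kpos: "K > 0" using K1000 by simp
  have KKpos: "KK > 0" unfolding KK_def using Kpos by simp
  have b16: "b < (16/100) * K"
  proof -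
    have sq: "((16/100) * K)^2 = (256/10000) * KK" unfolding KK_def power2_eq_square by simp
    have "b^2 < ((16/100) * K)^2" unfolding sq using bQ Qb2 KKpos by linarith
    moreover have "0 \<le> (16/100) * K" using Kpos by simp
    ultimately show ?thesis by (rule power_less_imp_less_base)
  qed
  have "2 * a / K \<le> b + K" using db by linarith
  then have "2 * a \<le> (b + K) * K" by (subst (asm) pos_divide_le_eq[OF Kpos])
  also have "(b + K) * K < ((16/100) * K + K) * K" using b16 Kpos by (intro mult_strict_right_mono) auto
  also have "\<dots> = (116/100) * KK" unfolding KK_def by (simp add: power2_eq_square algebra_simps)
  finally have "2 * a < (116/100) * KK" .
  moreover have "2 * a \<ge> 8 * (N / pi) - 2 * Q" using aQ by simp
  ultimately show False using Npi Qb epsN KKK NKK K1000 by linarith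
qed

lemma target_ge: "(4895/10000) \<le> 1/2 - 2 / (2 + (1 + 2 * sqrt 2) * pi) ^ 2"
proof -
  have s2: "sqrt 2 \<ge> (141/100)" by (rule real_le_rsqrt) (simp add: power2_eq_square)
  have p: "pi \<ge> (314/100)" using pi_approx by simp
  have "(1 + 2 * sqrt 2) * pi \<ge> (382/100) * (314/100)" using s2 p by (intro mult_mono) auto
  then have X: "2 + (1 + 2 * sqrt 2) * pi \<ge> (1399/100)" by simp
  then have "(2 + (1 + 2 * sqrt 2) * pi) * (2 + (1 + 2 * sqrt 2) * pi) \<ge> (1399/100) * (1399/100)"
    by (intro mult_mono) auto
  then have "(2 + (1 + 2 * sqrt 2) * pi) ^ 2 \<ge> 195" by (simp add: power2_eq_square)
  then have "2 / (2 + (1 + 2 * sqrt 2) * pi) ^ 2 \<le> 2 / 195" by (intro divide_left_mono) auto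
  then show ?thesis by simp
qed

lemma maxN_bound:
  assumes k1000: "k \<ge> 1000" and e0: "0 \<le> eps" and e1: "eps \<le> 1/4000"
  shows "real (maxN k eps) / (real k)^2 \<le> (4895/10000)"
proof -
  define M where "M = {n::nat. \<exists>A::int set. finite A \<and> card A = k \<and>
      real (card (sumset A \<inter> {1..int n})) \<ge> (1 - eps) * real n}"
  have bnd: "real n < (4895/10000) * (real k)^2" if "n \<in> M" for n
    using that main_bound[OF _ _ k1000 e0 e1] unfolding M_def by blast
  have sub: "M \<subseteq> {..k^2}"
  proof
    fix n assume "n \<in> M"
    then have "real n < (4895/10000) * (real k)^2" by (rule bnd)
    moreover have "(real k)^2 \<ge> 0" by simp
    ultimately have "real n \<le> (real k)^2" by linarith
    then have "real n \<le> real (k^2)" by simp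
    then show "n \<in> {..k^2}" by (simp only: of_nat_le_iff atMost_iff)
  qed
  have finM: "finite M" using finite_subset[OF sub] by simp
  have "0 \<in> M" unfolding M_def by (intro CollectI exI[of _ "{1..int k}"]) simp
  then have "M \<noteq> {}" by blast
  then have "Max M \<in> M" using Max_in finM by blast
  then have "real (Max M) < (4895/10000) * (real k)^2" by (rule bnd)
  moreover have "maxN k eps = Max M" unfolding maxN_def M_def by simp
  moreover have "(real k)^2 > 0" using k1000 by simp
  ultimately show ?thesis by (simp add: divide_le_eq)
qed

theorem theorem6:
  shows "b_sup \<le> ereal (1/2 - 2 / (2 + (1 + 2 * sqrt 2) * pi) ^ 2)"
proof -
  have ev: "eventually (\<lambda>x. (0 < fst x \<and> fst x < 1/4000) \<and> snd x \<ge> (1000::nat))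
       (at_right (0::real) \<times>\<^sub>F sequentially)"
  proof (rule eventually_prodI)
    show "eventually (\<lambda>e::real. 0 < e \<and> e < 1/4000) (at_right 0)"
      using eventually_at_right_real[of 0 "1/4000"] by simp
    show "eventually (\<lambda>k::nat. k \<ge> 1000) sequentially" by (rule eventually_ge_at_top)
  qed
  have "eventually (\<lambda>x. (\<lambda>(eps, k). ereal (real (maxN k eps) / (real k) ^ 2)) x
          \<le> ereal (1/2 - 2 / (2 + (1 + 2 * sqrt 2) * pi) ^ 2)) (at_right (0::real) \<times>\<^sub>F sequentially)"
  proof (rule eventually_mono[OF ev])
    fix x :: "real \<times> nat"
    assume h: "(0 < fst x \<and> fst x < 1/4000) \<and> snd x \<ge> 1000"
    obtain eps k where x: "x = (eps, k)" by (cases x)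
    have "real (maxN k eps) / (real k)^2 \<le> (4895/10000)"
      using maxN_bound[of k eps] h x by simp
    then have "real (maxN k eps) / (real k)^2 \<le> 1/2 - 2 / (2 + (1 + 2 * sqrt 2) * pi) ^ 2"
      using target_ge by linarith
    then show "(\<lambda>(eps, k). ereal (real (maxN k eps) / (real k) ^ 2)) x
          \<le> ereal (1/2 - 2 / (2 + (1 + 2 * sqrt 2) * pi) ^ 2)"
      using x by simp
  qed
  then show ?thesis unfolding b_sup_def by (rule Limsup_bounded)
qed

end
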